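(* Under the standing assumptions, for every $p^*\in X^*$: (i) $v(P_{p^*})\ge v(D^F_{p^*})$ if and only if $\Omega\cap B_{p^*}\subseteq\operatorname{epi}(f-g+\delta_A)^c\cap B_{p^*}$; (ii) $v(P_{p^*})\ge v(\bar D^F_{p^*})$ if and only if $K\cap B_{p^*}\subseteq\operatorname{epi}(f-g+\delta_A)^c\cap B_{p^*}$.
   Context: Let $X$ be a nontrivial separated locally convex space with topological dual $X^*$, endowed with the topology $\sigma(X,X^* )$; $\langle x,x^*\rangle$ is the value of $x^*\in X^*$ at $x\in X$. Put $W:=X^*\times X^*\times\mathbb{R}$, $\mathbb{R}_{++}:=]0,+\infty[$ and $Z:=X^*\times X^*\times\mathbb{R}_{++}$. For $y^*\in X^*$, $\alpha\in\mathbb{R}$, let $H^-_{y^*,\alpha}:=\{x\in X:\langle x,y^*\rangle<\alpha\}$. The coupling function $c:X\times W\to\overline{\mathbb{R}}$ is $c(x,(x^*,y^*,\alpha)):=\langle x,x^*\rangle$ if $\langle x,y^*\rangle<\alpha$ and $:=+\infty$ otherwise. For $h:X\to\overline{\mathbb{R}}$ its $c$-conjugate is $h^c:W\to\overline{\mathbb{R}}$, $h^c(w):=\sup_{x\in X}\{c(x,w)-h(x)\}$, with the convention $(+\infty)+(-\infty)=(-\infty)+(+\infty)=(+\infty)-(+\infty)=(-\infty)-(-\infty)=-\infty$ (so for proper $h$, $h^c(x^*,y^*,\alpha)=h^*(x^* )$ if $\operatorname{dom}h\subseteq H^-_{y^*,\alpha}$ and $+\infty$ otherwise). Epigraphs of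 functions on $W$ are subsets of $W\times\mathbb{R}$. $\delta_A$ is the indicator function of $A$. For $E\subseteq W\times\mathbb{R}$ and $e\in W\times\mathbb{R}$, $E-e:=\{z-e:z\in E\}$. Standing assumptions: $f,g:X\to\overline{\mathbb{R}}$ proper convex with $\operatorname{dom}f\subseteq\operatorname{dom}g$, $A\subseteq X$ nonempty, convention $(+\infty)-(+\infty)=+\infty$ in $f-g$. For $p^*\in X^*$: $(P_{p^*})$ is $\inf_{x\in A}\{f(x)-g(x)+\langle x,p^*\rangle\}$ with value $v(P_{p^*})$; with $\varphi_{p^*}(u^*,v^*,\gamma;x^*,y^*,\alpha):=g^c(u^*,v^*,\gamma)-f^c(u^*-x^*-p^*,-y^*,\alpha)-\delta_A^c(x^*,y^*,\alpha)$, the duals are $v(D^F_{p^*}):=\sup_{(x^*,y^*,\alpha)\in Z}\inf_{(u^*,v^*,\gamma)\in\operatorname{dom}g^c}\varphi_{p^*}$ and $v(\bar D^F_{p^*}):=\inf_{(u^*,v^*,\gamma)\in\operatorname{dom}g^c}\sup_{(x^*,y^*,\alpha)\in Z}\varphi_{p^*}$. Sets: $B_{p^*}:=\{-p^*\}\times\{0\}\times\mathbb{R}_{++}\times\mathbb{R}\subseteq W\times\mathbb{R}$; $\Omega:=\bigcup_{(x^*,y^*,\alpha)\in\operatorname{dom}\delta_A^c}\ \bigcap_{(u^*,v^*,\gamma)\in\operatorname{dom}g^c}\Big[\operatorname{epi}\big(f-c(\cdot,(-x^*,-y^*,\alpha))\big)^c-\big(u^*,0,0,g^c(u^*,v^*,\gamma)-\delta_A^c(x^*,y^*,\alpha)\big)\Big]$,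 $K:=\bigcap_{(u^*,v^*,\gamma)\in\operatorname{dom}g^c}\ \bigcup_{(x^*,y^*,\alpha)\in\operatorname{dom}\delta_A^c}\Big[\operatorname{epi}\big(f-c(\cdot,(-x^*,-y^*,\alpha))\big)^c-\big(u^*,0,0,g^c(u^*,v^*,\gamma)-\delta_A^c(x^*,y^*,\alpha)\big)\Big]$. *)

theory Defs
  imports "HOL-Analysis.Analysis"
begin

text \<open>The dual pair (X, X*): X is a real vector space (type 'a), X* is a set D of
linear functionals on X forming a linear subspace that separates points.  This is
exactly the data of a separated locally convex space endowed with sigma(X,X*).\<close>

definition dual_pair :: "('a::real_vector \<Rightarrow> real) set \<Rightarrow> bool" where
  "dual_pair D \<longleftrightarrow> (\<forall>l\<in>D. linear l) \<and> (\<lambda>_. 0) \<in> D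
     \<and> (\<forall>l\<in>D. \<forall>m\<in>D. (\<lambda>x. l x + m x) \<in> D)
     \<and> (\<forall>l\<in>D. \<forall>c::real. (\<lambda>x. c * l x) \<in> D)
     \<and> (\<forall>x. x \<noteq> 0 \<longrightarrow> (\<exists>l\<in>D. l x \<noteq> 0))"

type_synonym 'a Wt = "('a \<Rightarrow> real) \<times> ('a \<Rightarrow> real) \<times> real"

definition Wset :: "('a \<Rightarrow> real) set \<Rightarrow> 'a Wt set" where
  "Wset D = D \<times> D \<times> UNIV"

definition Zset :: "('a \<Rightarrow> real) set \<Rightarrow> 'a Wt set" where
  "Zset D = D \<times> D \<times> {0<..}"

definition WRset :: "('a \<Rightarrow> real) set \<Rightarrow> ('a Wt \<times> real) set" where
  "WRset D = Wset D \<times> UNIV"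

definition cpl :: "'a \<Rightarrow> 'a Wt \<Rightarrow> ereal" where
  "cpl x w = (case w of (xs, ys, \<alpha>) \<Rightarrow> if ys x < \<alpha> then ereal (xs x) else \<infinity>)"

text \<open>subtraction with the conjugation convention: inf - inf = -inf - (-inf) = -inf\<close>
definition csub :: "ereal \<Rightarrow> ereal \<Rightarrow> ereal" where
  "csub a b = (if (a = \<infinity> \<and> b = \<infinity>) \<or> (a = -\<infinity> \<and> b = -\<infinity>) then -\<infinity> else a - b)"

text \<open>subtraction with the convention inf - inf = +inf (used in f - g)\<close>
definition fsub :: "ereal \<Rightarrow> ereal \<Rightarrow> ereal" where
  "fsub a b = (if a = \<infinity> \<and> b = \<infinity> then \<infinity> else a - b)"

definition cconj :: "('a \<Rightarrow> ereal) \<Rightarrow> 'a Wt \<Rightarrow> ereal" where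
  "cconj h w = (SUP x. csub (cpl x w) (h x))"

definition cdom :: "('a \<Rightarrow> real) set \<Rightarrow> ('a Wt \<Rightarrow> ereal) \<Rightarrow> 'a Wt set" where
  "cdom D k = {w \<in> Wset D. k w < \<infinity>}"

definition epiW :: "('a \<Rightarrow> real) set \<Rightarrow> ('a Wt \<Rightarrow> ereal) \<Rightarrow> ('a Wt \<times> real) set" where
  "epiW D k = {(w, r). w \<in> Wset D \<and> k w \<le> ereal r}"

definition shiftW :: "('a Wt \<times> real) set \<Rightarrow> 'a Wt \<times> real \<Rightarrow> ('a Wt \<times> real) set" where
  "shiftW E e = (case e of ((a, b, c), d) \<Rightarrow>
     (\<lambda>((x, y, z), r). ((\<lambda>t. x t - a t, \<lambda>t. y t - b t, z - c), r - d)) ` E)"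

definition indic :: "'a set \<Rightarrow> 'a \<Rightarrow> ereal" where
  "indic A x = (if x \<in> A then 0 else \<infinity>)"

definition proper_convex :: "('a::real_vector \<Rightarrow> ereal) \<Rightarrow> bool" where
  "proper_convex f \<longleftrightarrow> (\<forall>x. f x \<noteq> -\<infinity>) \<and> (\<exists>x. f x < \<infinity>)
     \<and> convex {(x, r::real). f x \<le> ereal r}"

definition fmc :: "('a \<Rightarrow> ereal) \<Rightarrow> ('a \<Rightarrow> real) \<Rightarrow> ('a \<Rightarrow> real) \<Rightarrow> real \<Rightarrow> 'a \<Rightarrow> ereal" where
  "fmc f xs ys \<alpha> = (\<lambda>x. fsub (f x) (cpl x (\<lambda>t. - xs t, \<lambda>t. - ys t, \<alpha>)))"

definition Bset :: "('a \<Rightarrow> real) \<Rightarrow> ('a Wt \<times> real) set" where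
  "Bset p = {((\<lambda>x. - p x, \<lambda>_. 0, r), s) | r s. r > 0}"

definition Omega :: "('a \<Rightarrow> real) set \<Rightarrow> ('a \<Rightarrow> ereal) \<Rightarrow> ('a \<Rightarrow> ereal) \<Rightarrow> 'a set \<Rightarrow> ('a Wt \<times> real) set" where
  "Omega D f g A = (\<Union>(xs, ys, \<alpha>) \<in> cdom D (cconj (indic A)).
     {z \<in> WRset D. \<forall>(u, v, \<gamma>) \<in> cdom D (cconj g).
        z \<in> shiftW (epiW D (cconj (fmc f xs ys \<alpha>)))
               ((u, \<lambda>_. 0, 0), real_of_ereal (csub (cconj g (u, v, \<gamma>)) (cconj (indic A) (xs, ys, \<alpha>))))})"

definition Kset :: "('a \<Rightarrow> real) set \<Rightarrow> ('a \<Rightarrow> ereal) \<Rightarrow> ('a \<Rightarrow> ereal) \<Rightarrow> 'a set \<Rightarrow> ('a Wt \<times> real) set" where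
  "Kset D f g A = {z \<in> WRset D. \<forall>(u, v, \<gamma>) \<in> cdom D (cconj g).
     \<exists>(xs, ys, \<alpha>) \<in> cdom D (cconj (indic A)).
        z \<in> shiftW (epiW D (cconj (fmc f xs ys \<alpha>)))
               ((u, \<lambda>_. 0, 0), real_of_ereal (csub (cconj g (u, v, \<gamma>)) (cconj (indic A) (xs, ys, \<alpha>))))}"

definition vP :: "('a \<Rightarrow> ereal) \<Rightarrow> ('a \<Rightarrow> ereal) \<Rightarrow> 'a set \<Rightarrow> ('a \<Rightarrow> real) \<Rightarrow> ereal" where
  "vP f g A p = (INF x\<in>A. fsub (f x) (g x) + ereal (p x))"

definition phiF :: "('a \<Rightarrow> ereal) \<Rightarrow> ('a \<Rightarrow> ereal) \<Rightarrow> 'a set \<Rightarrow> ('a \<Rightarrow> real) \<Rightarrow> 'a Wt \<Rightarrow> 'a Wt \<Rightarrow> ereal" where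
  "phiF f g A p w z = (case w of (u, v, \<gamma>) \<Rightarrow> case z of (xs, ys, \<alpha>) \<Rightarrow>
     csub (csub (cconj g (u, v, \<gamma>)) (cconj f (\<lambda>t. u t - xs t - p t, \<lambda>t. - ys t, \<alpha>)))
          (cconj (indic A) (xs, ys, \<alpha>)))"

definition vDF :: "('a \<Rightarrow> real) set \<Rightarrow> ('a \<Rightarrow> ereal) \<Rightarrow> ('a \<Rightarrow> ereal) \<Rightarrow> 'a set \<Rightarrow> ('a \<Rightarrow> real) \<Rightarrow> ereal" where
  "vDF D f g A p = (SUP z\<in>Zset D. INF w\<in>cdom D (cconj g). phiF f g A p w z)"

definition vDFbar :: "('a \<Rightarrow> real) set \<Rightarrow> ('a \<Rightarrow> ereal) \<Rightarrow> ('a \<Rightarrow> ereal) \<Rightarrow> 'a set \<Rightarrow> ('a \<Rightarrow> real) \<Rightarrow> ereal" where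
  "vDFbar D f g A p = (INF w\<in>cdom D (cconj g). SUP z\<in>Zset D. phiF f g A p w z)"

end

theory Submission imports Defs begin

lemma csub_mono1: "a \<le> a' \<Longrightarrow> csub a b \<le> csub a' b"
  by (cases a; cases a'; cases b) (auto simp: csub_def)

lemma csub_anti2: "b \<le> b' \<Longrightarrow> csub a b' \<le> csub a b"
  by (cases a; cases b; cases b') (auto simp: csub_def)

lemma csub_inf2[simp]: "csub a \<infinity> = -\<infinity>"
  by (cases a) (auto simp: csub_def)

lemma cpl_anti: "\<alpha> \<le> \<alpha>' \<Longrightarrow> cpl x (xs, ys, \<alpha>') \<le> cpl x (xs, ys, \<alpha>)"
  by (auto simp: cpl_def)

lemma cconj_anti: "\<alpha> \<le> \<alpha>' \<Longrightarrow> cconj h (xs, ys, \<alpha>') \<le> cconj h (xs, ys, \<alpha>)"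
  unfolding cconj_def by (rule SUP_mono') (blast intro: csub_mono1 cpl_anti)

lemma cconj_ge: "csub (cpl x w) (h x) \<le> cconj h w"
  unfolding cconj_def by (rule SUP_upper) simp

lemma cconj_not_minf: assumes "h x = ereal a" shows "cconj h w \<noteq> -\<infinity>"
proof -
  have "csub (cpl x w) (h x) \<noteq> -\<infinity>" using assms
    by (cases w rule: prod_cases3) (auto simp: cpl_def csub_def)
  then show ?thesis using cconj_ge[of x w h] by auto
qed

lemma cconj_fmc:
  assumes "r > 0" and "\<forall>x. f x \<noteq> -\<infinity>"
  shows "cconj (fmc f xs ys \<alpha>) (\<lambda>t. - p t + u t, \<lambda>t. 0, r)
       = cconj f (\<lambda>t. u t - xs t - p t, \<lambda>t. - ys t, \<alpha>)"
  unfolding cconj_def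
proof (rule SUP_cong[OF refl])
  fix x
  show "csub (cpl x (\<lambda>t. - p t + u t, \<lambda>t. 0, r)) (fmc f xs ys \<alpha> x) = csub (cpl x (\<lambda>t. u t - xs t - p t, \<lambda>t. - ys t, \<alpha>)) (f x)"
    using assms(1) assms(2)[rule_format, of x]
    by (cases "f x") (auto simp: cpl_def fmc_def fsub_def csub_def)
qed

lemma shiftW_mem:
  "(((x, y, c), r) \<in> shiftW E ((a, b, c'), d)) \<longleftrightarrow>
   (((\<lambda>t. x t + a t, \<lambda>t. y t + b t, c + c'), r + d) \<in> E)"
proof
  assume "((x, y, c), r) \<in> shiftW E ((a, b, c'), d)"
  then obtain x' y' c0 r' where m: "((x', y', c0), r') \<in> E"
    and e: "x = (\<lambda>t. x' t - a t)" "y = (\<lambda>t. y' t - b t)" "c = c0 - c'" "r = r' - d"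
    unfolding shiftW_def by (auto simp: image_iff)
  have "(\<lambda>t. x t + a t) = x'" "(\<lambda>t. y t + b t) = y'" using e by auto
  then show "((\<lambda>t. x t + a t, \<lambda>t. y t + b t, c + c'), r + d) \<in> E" using m e by simp
next
  assume m: "((\<lambda>t. x t + a t, \<lambda>t. y t + b t, c + c'), r + d) \<in> E"
  show "((x, y, c), r) \<in> shiftW E ((a, b, c'), d)"
    unfolding shiftW_def prod.case image_iff
    by (rule bexI[OF _ m]) simp
qed

lemma key_arith:
  assumes "G = ereal g0" "S = ereal s0"
  shows "F \<le> ereal (s + real_of_ereal (csub G S)) \<longleftrightarrow> ereal (-s) \<le> csub (csub G F) S"
  using assms by (cases F) (auto simp: csub_def)

lemma cconj_obj:
  assumes r: "r > 0" and A: "A \<noteq> {}"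
  shows "cconj (\<lambda>x. fsub (f x) (g x) + indic A x) (\<lambda>x. - p x, \<lambda>_. 0, r) = - vP f g A p"
proof -
  define T where "T x = csub (cpl x (\<lambda>x. - p x, \<lambda>_. 0, r)) (fsub (f x) (g x) + indic A x)" for x
  have TA: "T x = - (fsub (f x) (g x) + ereal (p x))" if "x \<in> A" for x
    using that r unfolding T_def
    by (cases "fsub (f x) (g x)") (auto simp: cpl_def indic_def csub_def)
  have TN: "T x = -\<infinity>" if "x \<notin> A" for x
    using that r unfolding T_def by (auto simp: cpl_def indic_def)
  have "(SUP x. T x) = (SUP x\<in>A. - (fsub (f x) (g x) + ereal (p x)))"
  proof (rule antisym)
    show "(SUP x. T x) \<le> (SUP x\<in>A. - (fsub (f x) (g x) + ereal (p x)))"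
    proof (rule SUP_mono)
      fix n assume "n \<in> (UNIV::'a set)"
      show "\<exists>m\<in>A. T n \<le> - (fsub (f m) (g m) + ereal (p m))"
      proof (cases "n \<in> A")
        case True then show ?thesis using TA by force
      next
        case False then show ?thesis using TN A by auto
      qed
    qed
    show "(SUP x\<in>A. - (fsub (f x) (g x) + ereal (p x))) \<le> (SUP x. T x)"
      by (rule SUP_mono) (metis TA UNIV_I order_refl)
  qed
  then show ?thesis
    unfolding cconj_def vP_def T_def[symmetric] by (simp add: ereal_SUP_uminus_eq)
qed

theorem proposition6p2:
  fixes D :: "('a::real_vector \<Rightarrow> real) set" and f g :: "'a \<Rightarrow> ereal"
    and A :: "'a set" and p :: "'a \<Rightarrow> real"
  assumes "dual_pair D" and "\<exists>x::'a. x \<noteq> 0"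
    and "proper_convex f" and "proper_convex g"
    and "{x. f x < \<infinity>} \<subseteq> {x. g x < \<infinity>}"
    and "A \<noteq> {}"
    and "p \<in> D"
  shows "(vP f g A p \<ge> vDF D f g A p \<longleftrightarrow>
            Omega D f g A \<inter> Bset p \<subseteq>
              epiW D (cconj (\<lambda>x. fsub (f x) (g x) + indic A x)) \<inter> Bset p)
       \<and> (vP f g A p \<ge> vDFbar D f g A p \<longleftrightarrow>
            Kset D f g A \<inter> Bset p \<subseteq>
              epiW D (cconj (\<lambda>x. fsub (f x) (g x) + indic A x)) \<inter> Bset p)"
proof -
  have D0: "(\<lambda>_. 0) \<in> D" using assms(1) by (simp add: dual_pair_def)
  have dadd: "\<forall>l\<in>D. \<forall>m\<in>D. (\<lambda>x. l x + m x) \<in> D" using assms(1) by (simp add: dual_pair_def)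
  have dsc: "\<forall>l\<in>D. \<forall>c. (\<lambda>x. c * l x) \<in> D" using assms(1) by (simp add: dual_pair_def)
  have Dneg: "(\<lambda>x. - p x) \<in> D"
  proof -
    have "(\<lambda>x. (-1) * p x) \<in> D" using spec[OF bspec[OF dsc assms(7)], of "-1"] .
    then show ?thesis by simp
  qed
  have Dadd: "(\<lambda>t. - p t + u t) \<in> D" if "u \<in> D" for u
    using bspec[OF bspec[OF dadd Dneg] that] by simp
  have fnm: "\<forall>x. f x \<noteq> -\<infinity>" using assms(3) unfolding proper_convex_def by blast
  obtain xg where "g xg < \<infinity>" "g xg \<noteq> -\<infinity>" using assms(4) unfolding proper_convex_def by blast
  then obtain ga where ga: "g xg = ereal ga" by (cases "g xg") auto
  obtain a0 where a0: "a0 \<in> A" using assms(6) by blast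
  have ia0: "indic A a0 = ereal 0" using a0 by (simp add: indic_def)
  define Cg where "Cg = cdom D (cconj g)"
  define Cd where "Cd = cdom D (cconj (indic A))"
  define phi where "phi = phiF f g A p"
  define h where "h = (\<lambda>x. fsub (f x) (g x) + indic A x)"
  define Pt where "Pt r s = ((\<lambda>x. - p x, \<lambda>_::'a. 0::real, r::real), s::real)" for r s
  have PtWR: "Pt r s \<in> WRset D" for r s
    using Dneg D0 by (simp add: Pt_def WRset_def Wset_def)
  have Bset_eq: "Bset p = {Pt r s | r s. r > 0}" by (auto simp: Bset_def Pt_def)
  have KP: "Pt r s \<in> shiftW (epiW D (cconj (fmc f xs ys \<alpha>)))
               ((u, \<lambda>_. 0, 0), real_of_ereal (csub (cconj g (u, v, \<gamma>)) (cconj (indic A) (xs, ys, \<alpha>))))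
         \<longleftrightarrow> ereal (-s) \<le> phi (u, v, \<gamma>) (xs, ys, \<alpha>)"
    if r: "r > 0" and zz: "(xs, ys, \<alpha>) \<in> Cd" and w: "(u, v, \<gamma>) \<in> Cg" for r s xs ys \<alpha> u v \<gamma>
  proof -
    have uD: "u \<in> D" using w by (simp add: Cg_def cdom_def Wset_def)
    have G1: "cconj g (u, v, \<gamma>) < \<infinity>" using w by (simp add: Cg_def cdom_def)
    have G2: "cconj g (u, v, \<gamma>) \<noteq> -\<infinity>" by (rule cconj_not_minf[of g xg ga, OF ga])
    obtain g0 where g0: "cconj g (u, v, \<gamma>) = ereal g0" using G1 G2 by (cases "cconj g (u, v, \<gamma>)") auto
    have S1: "cconj (indic A) (xs, ys, \<alpha>) < \<infinity>" using zz by (simp add: Cd_def cdom_def)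
    have S2: "cconj (indic A) (xs, ys, \<alpha>) \<noteq> -\<infinity>" by (rule cconj_not_minf[of "indic A" a0 0, OF ia0])
    obtain s0 where s0: "cconj (indic A) (xs, ys, \<alpha>) = ereal s0" using S1 S2
      by (cases "cconj (indic A) (xs, ys, \<alpha>)") auto
    have "Pt r s \<in> shiftW (epiW D (cconj (fmc f xs ys \<alpha>)))
               ((u, \<lambda>_. 0, 0), real_of_ereal (csub (cconj g (u, v, \<gamma>)) (cconj (indic A) (xs, ys, \<alpha>))))
        \<longleftrightarrow> cconj (fmc f xs ys \<alpha>) (\<lambda>t. - p t + u t, \<lambda>t. 0, r)
             \<le> ereal (s + real_of_ereal (csub (cconj g (u, v, \<gamma>)) (cconj (indic A) (xs, ys, \<alpha>))))"
      unfolding Pt_def shiftW_mem using Dadd[OF uD] D0 by (simp add: epiW_def Wset_def)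
    also have "\<dots> \<longleftrightarrow> ereal (-s) \<le> phi (u, v, \<gamma>) (xs, ys, \<alpha>)"
      unfolding cconj_fmc[OF r fnm] phi_def phiF_def prod.case
      by (rule key_arith[OF g0 s0])
    finally show ?thesis .
  qed
  have OmP: "Pt r s \<in> Omega D f g A \<longleftrightarrow> (\<exists>zz\<in>Cd. \<forall>w\<in>Cg. ereal (-s) \<le> phi w zz)"
    if r: "r > 0" for r s
  proof
    assume "Pt r s \<in> Omega D f g A"
    then obtain zz where zz: "zz \<in> Cd"
      and m: "Pt r s \<in> (case zz of (xs, ys, \<alpha>) \<Rightarrow> {z \<in> WRset D. \<forall>(u, v, \<gamma>) \<in> Cg.
        z \<in> shiftW (epiW D (cconj (fmc f xs ys \<alpha>)))
               ((u, \<lambda>_. 0, 0), real_of_ereal (csub (cconj g (u, v, \<gamma>)) (cconj (indic A) (xs, ys, \<alpha>))))})"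
      unfolding Omega_def Cd_def[symmetric] Cg_def[symmetric] by blast
    obtain xs ys \<alpha> where zzd: "zz = (xs, ys, \<alpha>)" by (cases zz rule: prod_cases3)
    have "\<forall>w\<in>Cg. ereal (-s) \<le> phi w zz"
    proof
      fix w assume w: "w \<in> Cg"
      obtain u v \<gamma> where wd: "w = (u, v, \<gamma>)" by (cases w rule: prod_cases3)
      have "Pt r s \<in> shiftW (epiW D (cconj (fmc f xs ys \<alpha>)))
               ((u, \<lambda>_. 0, 0), real_of_ereal (csub (cconj g (u, v, \<gamma>)) (cconj (indic A) (xs, ys, \<alpha>))))"
        using m w unfolding zzd wd by auto
      then show "ereal (-s) \<le> phi w zz"
        using KP[OF r zz[unfolded zzd] w[unfolded wd]] unfolding zzd wd by blast
    qed
    then show "\<exists>zz\<in>Cd. \<forall>w\<in>Cg. ereal (-s) \<le> phi w zz" using zz by blast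
  next
    assume "\<exists>zz\<in>Cd. \<forall>w\<in>Cg. ereal (-s) \<le> phi w zz"
    then obtain zz where zz: "zz \<in> Cd" and H: "\<forall>w\<in>Cg. ereal (-s) \<le> phi w zz" by blast
    obtain xs ys \<alpha> where zzd: "zz = (xs, ys, \<alpha>)" by (cases zz rule: prod_cases3)
    have "Pt r s \<in> (case zz of (xs, ys, \<alpha>) \<Rightarrow> {z \<in> WRset D. \<forall>(u, v, \<gamma>) \<in> Cg.
        z \<in> shiftW (epiW D (cconj (fmc f xs ys \<alpha>)))
               ((u, \<lambda>_. 0, 0), real_of_ereal (csub (cconj g (u, v, \<gamma>)) (cconj (indic A) (xs, ys, \<alpha>))))})"
      unfolding zzd prod.case
    proof (intro CollectI conjI PtWR ballI)
      fix w assume w: "w \<in> Cg"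
      obtain u v \<gamma> where wd: "w = (u, v, \<gamma>)" by (cases w rule: prod_cases3)
      show "case w of (u, v, \<gamma>) \<Rightarrow> Pt r s \<in> shiftW (epiW D (cconj (fmc f xs ys \<alpha>)))
               ((u, \<lambda>_. 0, 0), real_of_ereal (csub (cconj g (u, v, \<gamma>)) (cconj (indic A) (xs, ys, \<alpha>))))"
        using H w zz unfolding zzd wd prod.case by (simp add: KP[OF r])
    qed
    then show "Pt r s \<in> Omega D f g A"
      unfolding Omega_def Cd_def[symmetric] Cg_def[symmetric] using zz by blast
  qed
  have KsP: "Pt r s \<in> Kset D f g A \<longleftrightarrow> (\<forall>w\<in>Cg. \<exists>zz\<in>Cd. ereal (-s) \<le> phi w zz)"
    if r: "r > 0" for r s
  proof -
    have "Pt r s \<in> Kset D f g A \<longleftrightarrow> (\<forall>w\<in>Cg. case w of (u, v, \<gamma>) \<Rightarrow> \<exists>zz\<in>Cd. case zz of (xs, ys, \<alpha>) \<Rightarrow>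
        Pt r s \<in> shiftW (epiW D (cconj (fmc f xs ys \<alpha>)))
               ((u, \<lambda>_. 0, 0), real_of_ereal (csub (cconj g (u, v, \<gamma>)) (cconj (indic A) (xs, ys, \<alpha>)))))"
      unfolding Kset_def Cd_def[symmetric] Cg_def[symmetric] mem_Collect_eq using PtWR[of r s] by blast
    also have "\<dots> \<longleftrightarrow> (\<forall>w\<in>Cg. \<exists>zz\<in>Cd. ereal (-s) \<le> phi w zz)"
    proof (intro ball_cong refl)
      fix w assume w: "w \<in> Cg"
      obtain u v \<gamma> where wd: "w = (u, v, \<gamma>)" by (cases w rule: prod_cases3)
      show "(case w of (u, v, \<gamma>) \<Rightarrow> \<exists>zz\<in>Cd. case zz of (xs, ys, \<alpha>) \<Rightarrow>
        Pt r s \<in> shiftW (epiW D (cconj (fmc f xs ys \<alpha>)))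
               ((u, \<lambda>_. 0, 0), real_of_ereal (csub (cconj g (u, v, \<gamma>)) (cconj (indic A) (xs, ys, \<alpha>)))))
          = (\<exists>zz\<in>Cd. ereal (-s) \<le> phi w zz)"
        unfolding wd prod.case
      proof (intro bex_cong refl)
        fix zz assume zz: "zz \<in> Cd"
        obtain xs ys \<alpha> where zzd: "zz = (xs, ys, \<alpha>)" by (cases zz rule: prod_cases3)
        show "(case zz of (xs, ys, \<alpha>) \<Rightarrow>
        Pt r s \<in> shiftW (epiW D (cconj (fmc f xs ys \<alpha>)))
               ((u, \<lambda>_. 0, 0), real_of_ereal (csub (cconj g (u, v, \<gamma>)) (cconj (indic A) (xs, ys, \<alpha>)))))
          = (ereal (-s) \<le> phi (u, v, \<gamma>) zz)"
          using KP[OF r zz[unfolded zzd] w[unfolded wd]] unfolding zzd prod.case .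
      qed
    qed
    finally show ?thesis .
  qed
  have EpP: "Pt r s \<in> epiW D (cconj h) \<longleftrightarrow> ereal (-s) \<le> vP f g A p"
    if r: "r > 0" for r s
  proof -
    have "Pt r s \<in> epiW D (cconj h) \<longleftrightarrow> - vP f g A p \<le> ereal s"
      using PtWR[of r s] cconj_obj[OF r assms(6), of f g p]
      by (simp add: Pt_def epiW_def WRset_def h_def)
    also have "\<dots> \<longleftrightarrow> ereal (-s) \<le> vP f g A p"
      by (metis ereal_uminus_le_reorder uminus_ereal.simps(1))
    finally show ?thesis .
  qed
  have setiff: "(X \<inter> Bset p \<subseteq> epiW D (cconj h) \<inter> Bset p) \<longleftrightarrow>
      (\<forall>r s. r > 0 \<longrightarrow> Pt r s \<in> X \<longrightarrow> Pt r s \<in> epiW D (cconj h))" for X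
  proof
    assume sub: "X \<inter> Bset p \<subseteq> epiW D (cconj h) \<inter> Bset p"
    show "\<forall>r s. r > 0 \<longrightarrow> Pt r s \<in> X \<longrightarrow> Pt r s \<in> epiW D (cconj h)"
    proof (intro allI impI)
      fix r s :: real assume "r > 0" "Pt r s \<in> X"
      then have "Pt r s \<in> X \<inter> Bset p" unfolding Bset_eq by blast
      then show "Pt r s \<in> epiW D (cconj h)" using sub by blast
    qed
  next
    assume H: "\<forall>r s. r > 0 \<longrightarrow> Pt r s \<in> X \<longrightarrow> Pt r s \<in> epiW D (cconj h)"
    show "X \<inter> Bset p \<subseteq> epiW D (cconj h) \<inter> Bset p"
    proof
      fix z assume z: "z \<in> X \<inter> Bset p"
      then obtain r s where "z = Pt r s" "r > 0" unfolding Bset_eq by blast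
      then show "z \<in> epiW D (cconj h) \<inter> Bset p" using z H by blast
    qed
  qed
  have phimono: "phi w (xs, ys, \<alpha>) \<le> phi w (xs, ys, max \<alpha> 1)" for w xs ys \<alpha>
  proof -
    obtain u v \<gamma> where w: "w = (u, v, \<gamma>)" by (cases w rule: prod_cases3)
    have F: "cconj f (\<lambda>t. u t - xs t - p t, \<lambda>t. - ys t, max \<alpha> 1) \<le> cconj f (\<lambda>t. u t - xs t - p t, \<lambda>t. - ys t, \<alpha>)"
      by (rule cconj_anti) simp
    have S: "cconj (indic A) (xs, ys, max \<alpha> 1) \<le> cconj (indic A) (xs, ys, \<alpha>)"
      by (rule cconj_anti) simp
    show ?thesis unfolding w phi_def phiF_def prod.case
      using csub_mono1[OF csub_anti2[OF F]] csub_anti2[OF S] by (rule order_trans)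
  qed
  have zzup: "(xs, ys, max \<alpha> 1) \<in> Cd \<and> (xs, ys, max \<alpha> 1) \<in> Zset D" if "(xs, ys, \<alpha>) \<in> Cd" for xs ys \<alpha>
  proof -
    have "cconj (indic A) (xs, ys, max \<alpha> 1) \<le> cconj (indic A) (xs, ys, \<alpha>)"
      by (rule cconj_anti) simp
    then show ?thesis using that by (auto simp: Cd_def cdom_def Zset_def Wset_def)
  qed
  have phiout: "phi w zz = -\<infinity>" if "zz \<in> Zset D" "zz \<notin> Cd" for w zz
  proof -
    obtain xs ys \<alpha> where zz: "zz = (xs, ys, \<alpha>)" by (cases zz rule: prod_cases3)
    have "cconj (indic A) zz = \<infinity>" using that by (auto simp: Cd_def cdom_def Zset_def Wset_def)
    then show ?thesis unfolding zz phi_def phiF_def by (cases w rule: prod_cases3) simp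
  qed
  define z0 where "z0 = ((\<lambda>_. 0) :: 'a \<Rightarrow> real, (\<lambda>_. 0) :: 'a \<Rightarrow> real, 1::real)"
  have z0Cd: "z0 \<in> Cd"
  proof -
    have "cconj (indic A) z0 \<le> 0"
      unfolding cconj_def z0_def
      by (rule SUP_least) (auto simp: cpl_def indic_def csub_def)
    then show ?thesis using D0 by (auto simp: Cd_def cdom_def Wset_def z0_def)
  qed
  define I where "I zz = (INF w\<in>Cg. phi w zz)" for zz
  define J where "J w = (SUP zz\<in>Cd. phi w zz)" for w
  have vDF_eq: "vDF D f g A p = (SUP zz\<in>Cd. I zz)"
  proof (rule antisym)
    show "vDF D f g A p \<le> (SUP zz\<in>Cd. I zz)"
      unfolding vDF_def phi_def[symmetric] Cg_def[symmetric] I_def[symmetric]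
    proof (rule SUP_least)
      fix zz assume zz: "zz \<in> Zset D"
      show "I zz \<le> (SUP zz\<in>Cd. I zz)"
      proof (cases "zz \<in> Cd")
        case True then show ?thesis by (rule SUP_upper)
      next
        case False
        have "I zz \<le> I z0" unfolding I_def by (rule INF_mono') (simp add: phiout[OF zz False])
        also have "\<dots> \<le> (SUP zz\<in>Cd. I zz)" using z0Cd by (rule SUP_upper)
        finally show ?thesis .
      qed
    qed
    show "(SUP zz\<in>Cd. I zz) \<le> vDF D f g A p"
      unfolding vDF_def phi_def[symmetric] Cg_def[symmetric] I_def[symmetric]
    proof (rule SUP_least)
      fix zz assume zz: "zz \<in> Cd"
      obtain xs ys \<alpha> where zzd: "zz = (xs, ys, \<alpha>)" by (cases zz rule: prod_cases3)
      have "I zz \<le> I (xs, ys, max \<alpha> 1)" unfolding I_def zzd by (rule INF_mono') (rule phimono)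
      also have "\<dots> \<le> (SUP zz\<in>Zset D. I zz)" using zzup zz zzd by (intro SUP_upper) auto
      finally show "I zz \<le> (SUP zz\<in>Zset D. I zz)" .
    qed
  qed
  have J_eq: "(SUP zz\<in>Zset D. phi w zz) = J w" for w
  proof (rule antisym)
    show "(SUP zz\<in>Zset D. phi w zz) \<le> J w" unfolding J_def
    proof (rule SUP_least)
      fix zz assume zz: "zz \<in> Zset D"
      show "phi w zz \<le> (SUP zz\<in>Cd. phi w zz)"
      proof (cases "zz \<in> Cd")
        case True then show ?thesis by (rule SUP_upper)
      next
        case False then show ?thesis by (simp add: phiout[OF zz False])
      qed
    qed
    show "J w \<le> (SUP zz\<in>Zset D. phi w zz)" unfolding J_def
    proof (rule SUP_least)
      fix zz assume zz: "zz \<in> Cd"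
      obtain xs ys \<alpha> where zzd: "zz = (xs, ys, \<alpha>)" by (cases zz rule: prod_cases3)
      have "phi w zz \<le> phi w (xs, ys, max \<alpha> 1)" unfolding zzd by (rule phimono)
      also have "\<dots> \<le> (SUP zz\<in>Zset D. phi w zz)" using zzup zz zzd by (intro SUP_upper) auto
      finally show "phi w zz \<le> (SUP zz\<in>Zset D. phi w zz)" .
    qed
  qed
  have vDFbar_eq: "vDFbar D f g A p = (INF w\<in>Cg. J w)"
    unfolding vDFbar_def phi_def[symmetric] Cg_def[symmetric] J_eq ..
  have part1: "vP f g A p \<ge> vDF D f g A p \<longleftrightarrow>
      (\<forall>r s. r > 0 \<longrightarrow> Pt r s \<in> Omega D f g A \<longrightarrow> Pt r s \<in> epiW D (cconj h))"
  proof
    assume le: "vP f g A p \<ge> vDF D f g A p"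
    show "\<forall>r s. r > 0 \<longrightarrow> Pt r s \<in> Omega D f g A \<longrightarrow> Pt r s \<in> epiW D (cconj h)"
    proof (intro allI impI)
      fix r s :: real assume r: "r > 0" and m: "Pt r s \<in> Omega D f g A"
      then obtain zz where zz: "zz \<in> Cd" "\<forall>w\<in>Cg. ereal (-s) \<le> phi w zz" using OmP by blast
      have "ereal (-s) \<le> I zz" unfolding I_def using zz(2) by (simp add: le_INF_iff)
      also have "\<dots> \<le> (SUP zz\<in>Cd. I zz)" using zz(1) by (rule SUP_upper)
      also have "\<dots> \<le> vP f g A p" using le vDF_eq by simp
      finally show "Pt r s \<in> epiW D (cconj h)" using EpP[OF r] by simp
    qed
  next
    assume H: "\<forall>r s. r > 0 \<longrightarrow> Pt r s \<in> Omega D f g A \<longrightarrow> Pt r s \<in> epiW D (cconj h)"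
    show "vP f g A p \<ge> vDF D f g A p"
    proof (rule ccontr)
      assume "\<not> ?thesis"
      then have "vP f g A p < (SUP zz\<in>Cd. I zz)" using vDF_eq by simp
      then obtain zz where zz: "zz \<in> Cd" "vP f g A p < I zz" by (auto simp: less_SUP_iff)
      then obtain t where t: "vP f g A p < ereal t" "ereal t < I zz" using ereal_dense2 by blast
      have "\<forall>w\<in>Cg. ereal (- (-t)) \<le> phi w zz"
        using t(2) unfolding I_def by (auto dest: less_INF_D intro: less_imp_le)
      then have "Pt 1 (-t) \<in> Omega D f g A" using OmP[of 1 "-t"] zz(1) by auto
      then have "ereal (- (-t)) \<le> vP f g A p" using H EpP[of 1 "-t"] by auto
      then show False using t(1) by simp
    qed
  qed
  have part2: "vP f g A p \<ge> vDFbar D f g A p \<longleftrightarrow>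
      (\<forall>r s. r > 0 \<longrightarrow> Pt r s \<in> Kset D f g A \<longrightarrow> Pt r s \<in> epiW D (cconj h))"
  proof
    assume le: "vP f g A p \<ge> vDFbar D f g A p"
    show "\<forall>r s. r > 0 \<longrightarrow> Pt r s \<in> Kset D f g A \<longrightarrow> Pt r s \<in> epiW D (cconj h)"
    proof (intro allI impI)
      fix r s :: real assume r: "r > 0" and m: "Pt r s \<in> Kset D f g A"
      then have H: "\<forall>w\<in>Cg. \<exists>zz\<in>Cd. ereal (-s) \<le> phi w zz" using KsP by blast
      have "ereal (-s) \<le> (INF w\<in>Cg. J w)"
      proof (rule INF_greatest)
        fix w assume "w \<in> Cg"
        then obtain zz where "zz \<in> Cd" "ereal (-s) \<le> phi w zz" using H by blast
        then show "ereal (-s) \<le> J w" unfolding J_def by (meson SUP_upper2)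
      qed
      also have "\<dots> \<le> vP f g A p" using le vDFbar_eq by simp
      finally show "Pt r s \<in> epiW D (cconj h)" using EpP[OF r] by simp
    qed
  next
    assume H: "\<forall>r s. r > 0 \<longrightarrow> Pt r s \<in> Kset D f g A \<longrightarrow> Pt r s \<in> epiW D (cconj h)"
    show "vP f g A p \<ge> vDFbar D f g A p"
    proof (rule ccontr)
      assume "\<not> ?thesis"
      then have "vP f g A p < (INF w\<in>Cg. J w)" using vDFbar_eq by simp
      then obtain t where t: "vP f g A p < ereal t" "ereal t < (INF w\<in>Cg. J w)" using ereal_dense2 by blast
      have "\<forall>w\<in>Cg. \<exists>zz\<in>Cd. ereal (- (-t)) \<le> phi w zz"
      proof
        fix w assume "w \<in> Cg"
        then have "ereal t < J w" using t(2) by (rule less_INF_D[rotated])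
        then obtain zz where "zz \<in> Cd" "ereal t < phi w zz" unfolding J_def by (auto simp: less_SUP_iff)
        then show "\<exists>zz\<in>Cd. ereal (- (-t)) \<le> phi w zz" by (auto intro: less_imp_le)
      qed
      then have "Pt 1 (-t) \<in> Kset D f g A" using KsP[of 1 "-t"] by auto
      then have "ereal (- (-t)) \<le> vP f g A p" using H EpP[of 1 "-t"] by auto
      then show False using t(1) by simp
    qed
  qed
  show ?thesis using part1 part2 setiff unfolding h_def by simp
qed

end
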